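(* Let $G$ be a finite group, $H$ a normal subgroup of $G$, and $K$ a subgroup of $G$ with either $H\cap K=\{1\}$ or $K\subseteq H$. Let $J=[HK:K]$ and let $\{t_1,\dots,t_J\}$ be a transversal for the left cosets of $K$ in $HK$. Let $\lambda:G\to\mathbb{Z}$ be defined by $\lambda(g)=J-1$ if $g\in K$, $\lambda(g)=-1$ if $g\in HK\setminus K$, and $\lambda(g)=0$ if $g\notin HK$. Then every subset of cardinality $J-1$ of the collection of functions $\{[t_j,\lambda]:j=1,\dots,J\}$ is linearly independent (over $\mathbb{Z}$).
   Context: $HK=\{hk:h\in H,k\in K\}$ is a subgroup since $H$ is normal. For $g\in G$ and a function $f:G\to\mathbb{Z}$, $[g,f]$ denotes the function $x\mapsto f(g^{-1}x)$. *)

theory Defs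
  imports "HOL-Algebra.Algebra"
begin

text \<open>The left translate [g,f] of a function f on the carrier of G: x maps to f(g^-1 x),
  and 0 outside the carrier (so functions G to Z are represented canonically).\<close>
definition translate :: "('a, 'b) monoid_scheme \<Rightarrow> 'a \<Rightarrow> ('a \<Rightarrow> int) \<Rightarrow> ('a \<Rightarrow> int)" where
  "translate G g f = (\<lambda>x. if x \<in> carrier G then f (inv\<^bsub>G\<^esub> g \<otimes>\<^bsub>G\<^esub> x) else 0)"

definition lam_fun :: "('a, 'b) monoid_scheme \<Rightarrow> 'a set \<Rightarrow> 'a set \<Rightarrow> nat \<Rightarrow> 'a \<Rightarrow> int" where
  "lam_fun G H K J = (\<lambda>g. if g \<in> K then int J - 1
                          else if g \<in> H <#>\<^bsub>G\<^esub> K then -1 else 0)"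

definition int_lin_indep_on :: "'a set \<Rightarrow> ('a \<Rightarrow> int) set \<Rightarrow> bool" where
  "int_lin_indep_on A F \<longleftrightarrow> finite F \<and>
     (\<forall>c :: ('a \<Rightarrow> int) \<Rightarrow> int. (\<forall>x\<in>A. (\<Sum>f\<in>F. c f * f x) = 0) \<longrightarrow> (\<forall>f\<in>F. c f = 0))"

end

theory Submission
  imports Defs "HOL-Algebra.SndIsomorphismGrp"
begin

theorem lemma3p2:
  fixes G (structure) and H K :: "'a set" and J :: nat and t :: "nat \<Rightarrow> 'a"
  assumes "group G" and "finite (carrier G)"
    and "H \<lhd> G" and "subgroup K G"
    and "H \<inter> K = {\<one>} \<or> K \<subseteq> H"
    and "J = card ((\<lambda>x. x <# K) ` (H <#> K))"
    and "\<forall>j\<in>{1..J}. t j \<in> H <#> K"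
    and "bij_betw (\<lambda>j. t j <# K) {1..J} ((\<lambda>x. x <# K) ` (H <#> K))"
  shows "\<forall>F. F \<subseteq> (\<lambda>j. translate G (t j) (lam_fun G H K J)) ` {1..J} \<and> card F = J - 1
           \<longrightarrow> int_lin_indep_on (carrier G) F"
proof -
  interpret group G by fact
  have HK: "subgroup (H <#> K) G"
  proof -
    have "second_isomorphism_grp H G K"
      unfolding second_isomorphism_grp_def second_isomorphism_grp_axioms_def
      using assms(3,4) by blast
    then show ?thesis by (rule second_isomorphism_grp.normal_set_mult_subgroup)
  qed
  define f where "f j = translate G (t j) (lam_fun G H K J)" for j
  have tc: "t j \<in> carrier G" if "j \<in> {1..J}" for j
    using assms(7) that HK subgroup.subset by blast
  have inj: "inj_on (\<lambda>j. t j <# K) {1..J}" using assms(8) bij_betw_def by blast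
  have val: "f j (t i) = (if i = j then int J - 1 else -1)" if i: "i \<in> {1..J}" and j: "j \<in> {1..J}" for i j
  proof -
    have ti: "t i \<in> carrier G" and tj: "t j \<in> carrier G" using tc i j by auto
    have inHK: "inv t j \<otimes> t i \<in> H <#> K"
      using subgroup.m_closed[OF HK subgroup.m_inv_closed[OF HK]] assms(7) i j by blast
    show ?thesis
    proof (cases "i = j")
      case True
      then show ?thesis unfolding f_def translate_def lam_fun_def
        using ti assms(4) subgroup.one_closed by fastforce
    next
      case False
      have "inv t j \<otimes> t i \<notin> K"
      proof
        assume "inv t j \<otimes> t i \<in> K"
        then have "t i \<in> t j <# K" using subgroup.lcos_module_rev[OF assms(4) assms(1) tj ti] by blast
        then have "t j <# K = t i <# K" using l_repr_independence[OF _ tj assms(4)] by blast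
        then show False using inj False i j unfolding inj_on_def by blast
      qed
      then show ?thesis unfolding f_def translate_def lam_fun_def using ti inHK False by auto
    qed
  qed
  have finj: "inj_on f {1..J}"
  proof (rule inj_onI)
    fix i j assume i: "i \<in> {1..J}" and j: "j \<in> {1..J}" and e: "f i = f j"
    show "i = j"
    proof (rule ccontr)
      assume "i \<noteq> j"
      then have "f i (t i) \<noteq> f j (t i)" using val[OF i i] val[OF i j] i by simp
      then show False using e by simp
    qed
  qed
  show ?thesis
  proof (intro allI impI)
    fix F assume F: "F \<subseteq> (\<lambda>j. translate G (t j) (lam_fun G H K J)) ` {1..J} \<and> card F = J - 1"
    then have Fs: "F \<subseteq> f ` {1..J}" and cF: "card F = J - 1" unfolding f_def by auto
    have finF: "finite F" using Fs finite_subset by blast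
    show "int_lin_indep_on (carrier G) F"
      unfolding int_lin_indep_on_def
    proof (intro conjI allI impI ballI finF)
      fix c :: "('a \<Rightarrow> int) \<Rightarrow> int" and g
      assume eq: "\<forall>x\<in>carrier G. (\<Sum>f\<in>F. c f * f x) = 0" and g: "g \<in> F"
      have cimg: "card (f ` {1..J}) = J" using finj card_image by fastforce
      have "F \<noteq> f ` {1..J}"
      proof
        assume "F = f ` {1..J}"
        then have "J - 1 = J" using cF cimg by simp
        moreover have "J \<noteq> 0" using cF g finF card_0_eq by fastforce
        ultimately show False by simp
      qed
      then obtain m where m: "m \<in> {1..J}" "f m \<notin> F" using Fs by blast
      have "(\<Sum>h\<in>F. c h * h (t m)) = (\<Sum>h\<in>F. - c h)"
      proof (rule sum.cong)
        fix h assume h: "h \<in> F"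
        then obtain j where j: "j \<in> {1..J}" "h = f j" using Fs by blast
        then have "j \<noteq> m" using m h by blast
        then show "c h * h (t m) = - c h" using val[OF m(1) j(1)] j by simp
      qed simp
      then have s0: "(\<Sum>h\<in>F. c h) = 0" using eq tc[OF m(1)] by (simp add: sum_negf)
      obtain i where i: "i \<in> {1..J}" "g = f i" using g Fs by blast
      have "(\<Sum>h\<in>F. c h * h (t i)) = (\<Sum>h\<in>F. (if h = g then int J * c h else 0) - c h)"
      proof (rule sum.cong)
        fix h assume h: "h \<in> F"
        then obtain j where j: "j \<in> {1..J}" "h = f j" using Fs by blast
        show "c h * h (t i) = (if h = g then int J * c h else 0) - c h"
        proof (cases "h = g")
          case True
          then have "j = i" using j i inj_onD[OF finj] by metis
          then have v: "h (t i) = int J - 1" using val[OF i(1) j(1)] j by simp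
          show ?thesis unfolding v using True by (simp add: algebra_simps)
        next
          case False
          then have "j \<noteq> i" using j i by blast
          then show ?thesis using False val[OF i(1) j(1)] j by simp
        qed
      qed simp
      also have "\<dots> = int J * c g" using g finF s0 by (simp add: sum_subtractf sum.delta)
      finally have "int J * c g = 0" using eq tc[OF i(1)] by simp
      moreover have "J \<noteq> 0" using i(1) by auto
      ultimately show "c g = 0" by simp
    qed
  qed
qed

end
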